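(* Consider $N$ agents $$\dot x_i=\sum_{j=1}^N\alpha_{ij}(y_j-y_i),\qquad y_i=\mathrm{sat}_i(x_i),\qquad i\in\mathcal V=\{1,\dots,N\},$$ where the constant weights $\alpha_{ij}\ge0$ define a directed, strongly connected graph with Laplacian $L$, and let $p=(p_1,\dots,p_N)^T$ be the left eigenvector of $L$ for eigenvalue $0$ normalized so that $\sum_i p_i=1$ (so $p_i>0$). Assume not all $x_i(t_0)$ are equal. Then the agents achieve consensus if and only if $$\Big|\sum_{i=1}^N p_i x_i(t_0)\Big|\le\min_{i\in\mathcal V}s_i.$$
   Context: $\mathrm{sat}_i(x)=\mathrm{sign}(x)\min\{|x|,s_i\}$ with $s_i>0$. $L=\mathrm{diag}(A\mathbf 1)-A$, $A=[\alpha_{ij}]$, $\alpha_{ij}>0$ iff $(i,j)$ is an edge. Strongly connected: a directed path exists between any two distinct nodes. Consensus: there is $C$ with $\lim_{t\to\infty}x_i(t)=C$ for all $i$. *)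

theory Defs
  imports "HOL-Analysis.Analysis"
begin

definition sat :: "real \<Rightarrow> real \<Rightarrow> real" where
  "sat si x = sgn x * min \<bar>x\<bar> si"

definition laplacian :: "('n::finite \<Rightarrow> 'n \<Rightarrow> real) \<Rightarrow> 'n \<Rightarrow> 'n \<Rightarrow> real" where
  "laplacian \<alpha> i j = (if i = j then (\<Sum>k\<in>UNIV. \<alpha> i k) else 0) - \<alpha> i j"

definition edges :: "('n \<Rightarrow> 'n \<Rightarrow> real) \<Rightarrow> ('n \<times> 'n) set" where
  "edges \<alpha> = {(i, j). \<alpha> i j > 0}"

definition strongly_connected :: "('n \<Rightarrow> 'n \<Rightarrow> real) \<Rightarrow> bool" where
  "strongly_connected \<alpha> \<longleftrightarrow> (\<forall>i j. i \<noteq> j \<longrightarrow> (i, j) \<in> (edges \<alpha>)\<^sup>+)"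

definition consensus :: "(real \<Rightarrow> 'n \<Rightarrow> real) \<Rightarrow> bool" where
  "consensus x \<longleftrightarrow> (\<exists>C. \<forall>i. ((\<lambda>t. x t i) \<longlongrightarrow> C) at_top)"

end

theory Submission
  imports Defs
begin


lemma sat_odd: "sat s (-x) = - sat s x"
  by (simp add: sat_def sgn_minus)

lemma sat_alt: "0 \<le> s \<Longrightarrow> sat s x = max (-s) (min x s)"
  by (auto simp: sat_def sgn_if min_def max_def)

lemma sat_lip: "0 \<le> s \<Longrightarrow> \<bar>sat s a - sat s b\<bar> \<le> \<bar>a - b\<bar>"
  by (simp add: sat_alt min_def max_def)

lemma sat_in: "\<bar>x\<bar> \<le> s \<Longrightarrow> sat s x = x"
  by (auto simp: sat_def sgn_if min_def)

lemma sat_hi: "0 \<le> s \<Longrightarrow> s \<le> x \<Longrightarrow> sat s x = s"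
  by (simp add: sat_alt)

lemma sat_lo: "0 \<le> s \<Longrightarrow> x \<le> -s \<Longrightarrow> sat s x = -s"
  by (simp add: sat_alt)

lemma sat_bound: "0 \<le> s \<Longrightarrow> \<bar>sat s x\<bar> \<le> s"
  by (simp add: sat_alt)

lemma sat_le_x: "0 \<le> s \<Longrightarrow> sat s x < s \<Longrightarrow> x \<le> sat s x"
  by (simp add: sat_alt min_def max_def split: if_splits)

lemma sat_ge_x: "0 \<le> s \<Longrightarrow> -s < sat s x \<Longrightarrow> sat s x \<le> x"
  by (simp add: sat_alt min_def max_def split: if_splits)

lemma sat_isCont: "0 \<le> s \<Longrightarrow> isCont (sat s) x"
proof -
  assume "0 \<le> s"
  then have "sat s = (\<lambda>x. max (-s) (min x s))" by (auto simp: sat_alt)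
  then show ?thesis by (simp add: continuous_intros)
qed

lemma sat_tendsto:
  assumes "0 \<le> s" "(f \<longlongrightarrow> c) F"
  shows "((\<lambda>t. sat s (f t)) \<longlongrightarrow> sat s c) F"
  using isCont_tendsto_compose[OF sat_isCont[OF assms(1)] assms(2)] .

lemma sc_closed:
  assumes sc: "strongly_connected \<alpha>" and A: "a \<in> A"
    and cl: "\<forall>i j. i \<in> A \<longrightarrow> \<alpha> i j > 0 \<longrightarrow> j \<in> A"
  shows "j \<in> A"
proof (cases "a = j")
  case False
  then have "(a,j) \<in> (edges \<alpha>)\<^sup>+" using sc by (auto simp: strongly_connected_def)
  then show ?thesis using A
    by (induction rule: trancl_induct) (auto simp: edges_def cl)
qed (use A in simp)

lemma mvt_within:
  fixes f :: "real \<Rightarrow> real"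
  assumes d: "\<forall>t\<ge>t0. (f has_real_derivative f' t) (at t within {t0..})"
    and "t0 \<le> a" "a < b"
  shows "\<exists>z. a < z \<and> z < b \<and> f b - f a = (b - a) * f' z"
proof -
  have "continuous_on {t0..} f"
    using d by (meson DERIV_continuous atLeast_iff continuous_on_eq_continuous_within)
  then have c: "continuous_on {a..b} f"
    by (rule continuous_on_subset) (use assms in auto)
  have da: "(f has_real_derivative f' z) (at z)" if "a < z" for z
  proof -
    have "(f has_real_derivative f' z) (at z within {t0<..})"
    proof (rule DERIV_subset[of _ _ _ "{t0..}"])
      show "(f has_real_derivative f' z) (at z within {t0..})" using d that assms(2) by simp
    qed auto
    moreover have "at z within {t0<..} = at z"
      by (rule at_within_open) (use that assms(2) in auto)
    ultimately show ?thesis by simp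
  qed
  obtain l z where "a < z" "z < b" "DERIV f z :> l" "f b - f a = (b - a) * l"
    using MVT[OF assms(3) c] da real_differentiable_def by blast
  then show ?thesis using da DERIV_unique by metis
qed



lemma deriv_le_within:
  fixes f :: "real \<Rightarrow> real"
  assumes d: "\<forall>t\<ge>t0. (f has_real_derivative f' t) (at t within {t0..})"
    and "t0 \<le> a" "a \<le> b" and K: "\<forall>z. a < z \<and> z < b \<longrightarrow> f' z \<le> K"
  shows "f b - f a \<le> (b - a) * K"
proof (cases "a = b")
  case False
  then have "a < b" using assms by simp
  then obtain z where "a < z" "z < b" "f b - f a = (b - a) * f' z"
    using mvt_within[OF d assms(2)] by blast
  then show ?thesis using K \<open>a < b\<close> by (simp add: mult_left_mono)
qed simp

lemma deriv_ge_within: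
  fixes f :: "real \<Rightarrow> real"
  assumes d: "\<forall>t\<ge>t0. (f has_real_derivative f' t) (at t within {t0..})"
    and "t0 \<le> a" "a \<le> b" and K: "\<forall>z. a < z \<and> z < b \<longrightarrow> K \<le> f' z"
  shows "(b - a) * K \<le> f b - f a"
proof (cases "a = b")
  case False
  then have "a < b" using assms by simp
  then obtain z where "a < z" "z < b" "f b - f a = (b - a) * f' z"
    using mvt_within[OF d assms(2)] by blast
  then show ?thesis using K \<open>a < b\<close> by (simp add: mult_left_mono)
qed simp

lemma deriv_bound_within:
  fixes f :: "real \<Rightarrow> real"
  assumes d: "\<forall>t\<ge>t0. (f has_real_derivative f' t) (at t within {t0..})"
    and B: "\<forall>t\<ge>t0. \<bar>f' t\<bar> \<le> B" and a: "t0 \<le> a" and b: "t0 \<le> b"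
  shows "\<bar>f b - f a\<bar> \<le> B * \<bar>b - a\<bar>"
proof -
  have *: "\<bar>f v - f u\<bar> \<le> B * (v - u)" if "t0 \<le> u" "u \<le> v" for u v
  proof -
    have "f v - f u \<le> (v - u) * B"
      by (rule deriv_le_within[OF d that]) (use B that in \<open>smt (verit) abs_le_iff\<close>)
    moreover have "(v - u) * (-B) \<le> f v - f u"
      by (rule deriv_ge_within[OF d that]) (use B that in \<open>smt (verit) abs_le_iff\<close>)
    ultimately show ?thesis by (simp add: algebra_simps)
  qed
  show ?thesis
  proof (cases "a \<le> b")
    case True then show ?thesis using *[OF a True] by simp
  next
    case False then show ?thesis using *[OF b] by (simp add: abs_minus_commute)
  qed
qed

lemma deriv_lim_pos:
  fixes f :: "real \<Rightarrow> real"
  assumes d: "\<forall>t\<ge>t0. (f has_real_derivative f' t) (at t within {t0..})"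
    and fc: "(f \<longlongrightarrow> c) at_top" and fd: "(f' \<longlongrightarrow> D) at_top"
  shows "D \<le> 0"
proof (rule ccontr)
  assume "\<not> D \<le> 0"
  then have D: "D > 0" by simp
  have "\<forall>\<^sub>F t in at_top. f' t > D/2"
    using order_tendstoD(1)[OF fd, of "D/2"] D by simp
  then obtain T1 where T1: "\<forall>t\<ge>T1. f' t > D/2" by (auto simp: eventually_at_top_linorder)
  have "\<forall>\<^sub>F t in at_top. dist (f t) c < 1" using tendstoD[OF fc] by simp
  then obtain T2 where T2: "\<forall>t\<ge>T2. dist (f t) c < 1" by (auto simp: eventually_at_top_linorder)
  define T where "T = max t0 (max T1 T2)"
  define t where "t = T + 6 / D"
  have "T \<le> t" using D by (simp add: t_def)
  have "(t - T) * (D/2) \<le> f t - f T"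
    by (rule deriv_ge_within[OF d _ \<open>T \<le> t\<close>]) (use T1 in \<open>auto simp: T_def intro: less_imp_le\<close>)
  moreover have "(t - T) * (D/2) = 3" using D by (simp add: t_def)
  moreover have "dist (f t) c < 1" "dist (f T) c < 1"
    using T2 \<open>T \<le> t\<close> by (auto simp: T_def)
  ultimately show False by (simp add: dist_real_def)
qed

lemma deriv_lim_zero:
  fixes f :: "real \<Rightarrow> real"
  assumes d: "\<forall>t\<ge>t0. (f has_real_derivative f' t) (at t within {t0..})"
    and fc: "(f \<longlongrightarrow> c) at_top" and fd: "(f' \<longlongrightarrow> D) at_top"
  shows "D = 0"
proof -
  have "D \<le> 0" by (rule deriv_lim_pos[OF d fc fd])
  moreover have "-D \<le> 0"
  proof (rule deriv_lim_pos[of t0 "\<lambda>t. - f t" "\<lambda>t. - f' t"])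
    show "\<forall>t\<ge>t0. ((\<lambda>t. - f t) has_real_derivative - f' t) (at t within {t0..})"
      using d by (auto intro: derivative_intros)
  qed (use fc fd in \<open>auto intro: tendsto_minus\<close>)
  ultimately show ?thesis by simp
qed



locale sys =
  fixes \<alpha> :: "'n::finite \<Rightarrow> 'n \<Rightarrow> real" and s :: "'n \<Rightarrow> real"
    and x :: "real \<Rightarrow> 'n \<Rightarrow> real" and t0 :: real
  assumes nonneg: "\<forall>i j. \<alpha> i j \<ge> 0" and s_pos: "\<forall>i. s i > 0"
    and ode: "\<forall>t\<ge>t0. \<forall>i. ((\<lambda>\<tau>. x \<tau> i) has_real_derivative
                 (\<Sum>j\<in>UNIV. \<alpha> i j * (sat (s j) (x t j) - sat (s i) (x t i)))) (at t within {t0..})"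
begin

abbreviation y where "y t i \<equiv> sat (s i) (x t i)"
abbreviation xd where "xd t i \<equiv> (\<Sum>j\<in>UNIV. \<alpha> i j * (y t j - y t i))"

lemma s_nn: "0 \<le> s i" using s_pos by (simp add: less_imp_le)

lemma der: "\<forall>t\<ge>t0. ((\<lambda>\<tau>. x \<tau> i) has_real_derivative xd t i) (at t within {t0..})"
  using ode by simp

definition B :: "'n \<Rightarrow> real" where "B i = (\<Sum>j\<in>UNIV. \<alpha> i j * (s j + s i))"

lemma xd_bound: "\<bar>xd t i\<bar> \<le> B i"
proof -
  have "\<bar>xd t i\<bar> \<le> (\<Sum>j\<in>UNIV. \<bar>\<alpha> i j * (y t j - y t i)\<bar>)" by (rule sum_abs)
  also have "\<dots> \<le> (\<Sum>j\<in>UNIV. \<alpha> i j * (s j + s i))"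
  proof (rule sum_mono)
    fix j
    have "\<bar>y t j - y t i\<bar> \<le> s j + s i"
      using sat_bound[OF s_nn, of j "x t j"] sat_bound[OF s_nn, of i "x t i"] by linarith
    then show "\<bar>\<alpha> i j * (y t j - y t i)\<bar> \<le> \<alpha> i j * (s j + s i)"
      using nonneg by (simp add: abs_mult mult_left_mono)
  qed
  finally show ?thesis by (simp add: B_def)
qed

lemma x_lip: "t0 \<le> a \<Longrightarrow> t0 \<le> b \<Longrightarrow> \<bar>x b i - x a i\<bar> \<le> B i * \<bar>b - a\<bar>"
  by (rule deriv_bound_within[OF der]) (auto simp: xd_bound)

lemma y_lip: "t0 \<le> a \<Longrightarrow> t0 \<le> b \<Longrightarrow> \<bar>y b i - y a i\<bar> \<le> B i * \<bar>b - a\<bar>"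
  using x_lip[of a b i] sat_lip[OF s_nn, of i "x b i" "x a i"] by linarith

lemma neg: "sys \<alpha> s (\<lambda>t i. - x t i) t0"
proof
  show "\<forall>i j. 0 \<le> \<alpha> i j" "\<forall>i. 0 < s i" using nonneg s_pos by auto
  show "\<forall>t\<ge>t0. \<forall>i. ((\<lambda>\<tau>. - x \<tau> i) has_real_derivative
        (\<Sum>j\<in>UNIV. \<alpha> i j * (sat (s j) (- x t j) - sat (s i) (- x t i)))) (at t within {t0..})"
  proof (intro allI impI)
    fix t i assume "t0 \<le> t"
    have "((\<lambda>\<tau>. - x \<tau> i) has_real_derivative - xd t i) (at t within {t0..})"
      using der \<open>t0 \<le> t\<close> by (auto intro: derivative_intros)
    moreover have "- xd t i = (\<Sum>j\<in>UNIV. \<alpha> i j * (sat (s j) (- x t j) - sat (s i) (- x t i)))"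
      by (simp add: sat_odd sum_negf[symmetric] algebra_simps)
    ultimately show "((\<lambda>\<tau>. - x \<tau> i) has_real_derivative
        (\<Sum>j\<in>UNIV. \<alpha> i j * (sat (s j) (- x t j) - sat (s i) (- x t i)))) (at t within {t0..})"
      by simp
  qed
qed

end


lemma sq_prod_le:
  fixes e :: "'n::finite \<Rightarrow> real"
  shows "\<bar>e i\<bar> * \<bar>e j\<bar> \<le> (\<Sum>k\<in>UNIV. (e k)^2)"
proof -
  have a: "(e i)^2 \<le> (\<Sum>k\<in>UNIV. (e k)^2)" "(e j)^2 \<le> (\<Sum>k\<in>UNIV. (e k)^2)"
    by (auto intro: member_le_sum)
  have "0 \<le> (\<bar>e i\<bar> - \<bar>e j\<bar>)^2" by simp
  then have "2 * (\<bar>e i\<bar> * \<bar>e j\<bar>) \<le> \<bar>e i\<bar>^2 + \<bar>e j\<bar>^2"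
    by (simp add: power2_diff)
  then have "\<bar>e i\<bar> * \<bar>e j\<bar> \<le> ((e i)^2 + (e j)^2) / 2" by simp
  moreover have "((e i)^2 + (e j)^2) / 2 \<le> ((\<Sum>k\<in>UNIV. (e k)^2) + (\<Sum>k\<in>UNIV. (e k)^2)) / 2"
    using a by (intro divide_right_mono add_mono) auto
  ultimately show ?thesis by simp
qed

context sys begin

lemma xd_lim:
  assumes lim: "\<forall>i. ((\<lambda>t. x t i) \<longlongrightarrow> C) at_top"
  shows "((\<lambda>t. xd t i) \<longlongrightarrow> (\<Sum>j\<in>UNIV. \<alpha> i j * (sat (s j) C - sat (s i) C))) at_top"
  by (intro tendsto_sum tendsto_mult_left tendsto_diff sat_tendsto s_nn) (use lim in auto)

lemma xd_lim_zero:
  assumes lim: "\<forall>i. ((\<lambda>t. x t i) \<longlongrightarrow> C) at_top"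
  shows "(\<Sum>j\<in>UNIV. \<alpha> i j * (sat (s j) C - sat (s i) C)) = 0"
  using deriv_lim_zero[OF der lim[rule_format] xd_lim[OF lim]] .

lemma onlyif_pos:
  assumes sc: "strongly_connected \<alpha>" and lim: "\<forall>i. ((\<lambda>t. x t i) \<longlongrightarrow> C) at_top"
    and ne: "\<exists>i j. x t0 i \<noteq> x t0 j"
  shows "C \<le> Min (range s)"
proof (rule ccontr)
  define m where "m = Min (range s)"
  assume "\<not> C \<le> Min (range s)"
  then have Cm: "m < C" unfolding m_def by linarith
  have m_le: "m \<le> s i" for i by (simp add: m_def)
  have "m \<in> range s" unfolding m_def by (rule Min_in) auto
  then obtain k where k: "s k = m" by auto
  have m_pos: "0 < m" using s_pos k by metis
  have satC: "sat (s j) C = min C (s j)" for j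
    using s_nn[of j] Cm m_pos by (auto simp: sat_alt)
  have allm0: "j \<in> {j. s j = m}" for j
  proof (rule sc_closed[OF sc])
    show "k \<in> {j. s j = m}" using k by simp
    show "\<forall>i j. i \<in> {j. s j = m} \<longrightarrow> 0 < \<alpha> i j \<longrightarrow> j \<in> {j. s j = m}"
    proof (intro allI impI, unfold mem_Collect_eq)
      fix i j assume i: "s i = m" and a: "0 < \<alpha> i j"
      have z: "(\<Sum>j\<in>UNIV. \<alpha> i j * (sat (s j) C - m)) = 0"
        using xd_lim_zero[OF lim, of i] i satC[of i] Cm by simp
      have nn: "\<forall>j\<in>UNIV. 0 \<le> \<alpha> i j * (sat (s j) C - m)"
        using nonneg satC m_le Cm by (simp add: min_def)
      have "\<alpha> i j * (sat (s j) C - m) = 0"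
        using sum_nonneg_eq_0_iff[of UNIV "\<lambda>j. \<alpha> i j * (sat (s j) C - m)"] z nn by simp
      then have "min C (s j) = m" using a satC[of j] by simp
      then show "s j = m" using Cm by (simp add: min_def split: if_splits)
    qed
  qed
  have allm: "s j = m" for j using allm0[of j] by simp
  (* step 3: finite time arrival *)
  have "\<forall>\<^sub>F t in at_top. \<forall>i. m < x t i"
    using lim Cm by (intro eventually_all_finite) (auto intro: order_tendstoD)
  then obtain T1 where T1: "\<forall>t\<ge>T1. \<forall>i. m < x t i" by (auto simp: eventually_at_top_linorder)
  define T where "T = max t0 T1"
  have tT: "t0 \<le> T" by (simp add: T_def)
  have xd0: "xd t i = 0" if "T \<le> t" for t i
  proof -
    have "y t j = m" for j
    proof -
      have "m < x t j" using T1 that by (simp add: T_def)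
      then show ?thesis using sat_hi[of m "x t j"] m_pos allm[of j] by simp
    qed
    then show ?thesis by simp
  qed
  have xconst: "x t i = x T i" if "T \<le> t" for t i
  proof -
    have "x t i - x T i \<le> (t - T) * 0"
      by (rule deriv_le_within[OF der tT that]) (use xd0 in auto)
    moreover have "(t - T) * 0 \<le> x t i - x T i"
      by (rule deriv_ge_within[OF der tT that]) (use xd0 in auto)
    ultimately show ?thesis by simp
  qed
  have xTC: "x T i = C" for i
  proof -
    have "\<forall>t\<ge>T. x T i = x t i" using xconst by metis
    then have ev: "\<forall>\<^sub>F t in at_top. x T i = x t i"
      unfolding eventually_at_top_linorder by blast
    have "((\<lambda>t::real. x T i) \<longlongrightarrow> C) at_top"
      by (rule iffD2[OF tendsto_cong[OF ev] lim[rule_format, of i]])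
    then show ?thesis by (simp add: tendsto_const_iff)
  qed
  (* step 4: backward uniqueness *)
  define Dv where "Dv t = (\<Sum>i\<in>UNIV. (x t i - C)^2)" for t
  define Dd where "Dd t = (\<Sum>i\<in>UNIV. 2 * (x t i - C) * xd t i)" for t
  define K where "K = 4 * (\<Sum>i\<in>UNIV. \<Sum>j\<in>UNIV. \<alpha> i j)"
  have dD: "\<forall>t\<ge>t0. (Dv has_real_derivative Dd t) (at t within {t0..})"
  proof (intro allI impI)
    fix t assume "t0 \<le> t"
    have "((\<lambda>t. (x t i - C)^2) has_real_derivative 2 * (x t i - C) * xd t i) (at t within {t0..})" for i
    proof -
      have h: "((\<lambda>t. x t i - C) has_real_derivative xd t i - 0) (at t within {t0..})"
        by (rule DERIV_diff[OF der[rule_format, OF \<open>t0 \<le> t\<close>] DERIV_const])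
      show ?thesis using DERIV_power[OF h, of 2] by (simp add: algebra_simps)
    qed
    then have "((\<lambda>t. \<Sum>i\<in>UNIV. (x t i - C)^2) has_real_derivative
            (\<Sum>i\<in>UNIV. 2 * (x t i - C) * xd t i)) (at t within {t0..})"
      by (intro DERIV_sum) auto
    then show "(Dv has_real_derivative Dd t) (at t within {t0..})"
      unfolding Dd_def by (simp add: Dv_def[abs_def])
  qed
  have Dd_bound: "- K * Dv t \<le> Dd t" for t
  proof -
    let ?e = "\<lambda>i. x t i - C"
    have yd: "\<bar>y t j - y t i\<bar> \<le> \<bar>?e j\<bar> + \<bar>?e i\<bar>" for i j
    proof -
      have "y t j - y t i = (sat m (x t j) - sat m C) - (sat m (x t i) - sat m C)"
        using allm by simp
      then show ?thesis using sat_lip[of m "x t j" C] sat_lip[of m "x t i" C] m_pos by simp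
    qed
    have xdb: "\<bar>xd t i\<bar> \<le> (\<Sum>j\<in>UNIV. \<alpha> i j * (\<bar>?e j\<bar> + \<bar>?e i\<bar>))" for i
    proof -
      have "\<bar>xd t i\<bar> \<le> (\<Sum>j\<in>UNIV. \<bar>\<alpha> i j * (y t j - y t i)\<bar>)" by (rule sum_abs)
      also have "\<dots> \<le> (\<Sum>j\<in>UNIV. \<alpha> i j * (\<bar>?e j\<bar> + \<bar>?e i\<bar>))"
        by (rule sum_mono) (use nonneg yd in \<open>auto simp: abs_mult intro: mult_left_mono\<close>)
      finally show ?thesis .
    qed
    have "\<bar>Dd t\<bar> \<le> (\<Sum>i\<in>UNIV. \<bar>2 * ?e i * xd t i\<bar>)" unfolding Dd_def by (rule sum_abs)
    also have "\<dots> \<le> (\<Sum>i\<in>UNIV. \<Sum>j\<in>UNIV. \<alpha> i j * (4 * Dv t))"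
    proof (rule sum_mono)
      fix i
      have "\<bar>2 * ?e i * xd t i\<bar> = 2 * \<bar>?e i\<bar> * \<bar>xd t i\<bar>" by (simp only: abs_mult abs_numeral)
      also have "\<dots> \<le> 2 * \<bar>?e i\<bar> * (\<Sum>j\<in>UNIV. \<alpha> i j * (\<bar>?e j\<bar> + \<bar>?e i\<bar>))"
        by (intro mult_left_mono xdb) auto
      also have "\<dots> = (\<Sum>j\<in>UNIV. \<alpha> i j * (2 * (\<bar>?e i\<bar> * \<bar>?e j\<bar> + \<bar>?e i\<bar> * \<bar>?e i\<bar>)))"
        by (simp add: sum_distrib_left algebra_simps)
      also have "\<dots> \<le> (\<Sum>j\<in>UNIV. \<alpha> i j * (4 * Dv t))"
      proof (rule sum_mono)
        fix j
        have "\<bar>?e i\<bar> * \<bar>?e j\<bar> \<le> Dv t" unfolding Dv_def by (rule sq_prod_le)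
        moreover have "\<bar>?e i\<bar> * \<bar>?e i\<bar> \<le> Dv t" unfolding Dv_def by (rule sq_prod_le)
        ultimately show "\<alpha> i j * (2 * (\<bar>?e i\<bar> * \<bar>?e j\<bar> + \<bar>?e i\<bar> * \<bar>?e i\<bar>)) \<le> \<alpha> i j * (4 * Dv t)"
          using nonneg by (intro mult_left_mono) auto
      qed
      finally show "\<bar>2 * ?e i * xd t i\<bar> \<le> (\<Sum>j\<in>UNIV. \<alpha> i j * (4 * Dv t))" .
    qed
    also have "\<dots> = (\<Sum>i\<in>UNIV. \<Sum>j\<in>UNIV. \<alpha> i j) * (4 * Dv t)"
      by (simp only: sum_distrib_right)
    also have "\<dots> = K * Dv t" by (simp add: K_def)
    finally show ?thesis by linarith
  qed
  define G where "G t = Dv t * exp (K * t)" for t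
  have dG: "\<forall>t\<ge>t0. (G has_real_derivative (Dd t * exp (K * t) + Dv t * (exp (K * t) * K)))
              (at t within {t0..})"
  proof (intro allI impI)
    fix t assume "t0 \<le> t"
    show "(G has_real_derivative (Dd t * exp (K * t) + Dv t * (exp (K * t) * K))) (at t within {t0..})"
    proof -
      have e: "((\<lambda>t. exp (K*t)) has_real_derivative exp (K*t) * K) (at t within {t0..})"
        by (auto intro!: derivative_eq_intros)
      show ?thesis unfolding G_def[abs_def]
        using DERIV_mult[OF dD[rule_format, OF \<open>t0 \<le> t\<close>] e] by (simp add: algebra_simps)
    qed
  qed
  have "(T - t0) * 0 \<le> G T - G t0"
  proof (rule deriv_ge_within[OF dG order_refl tT], intro allI impI)
    fix z
    have "0 \<le> exp (K * z) * (Dd z + K * Dv z)" using Dd_bound[of z] by simp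
    then show "0 \<le> Dd z * exp (K * z) + Dv z * (exp (K * z) * K)" by (simp add: algebra_simps)
  qed
  moreover have "G T = 0" using xTC by (simp add: G_def Dv_def)
  moreover have "0 \<le> Dv t0" by (simp add: Dv_def sum_nonneg)
  ultimately have "Dv t0 * exp (K * t0) \<le> 0" "0 \<le> Dv t0" by (simp_all add: G_def)
  then have "Dv t0 = 0" by (smt (verit) exp_gt_zero mult_pos_pos)
  then have "\<forall>i. x t0 i = C" by (simp add: Dv_def sum_nonneg_eq_0_iff)
  then show False using ne by simp
qed

end


definition F :: "real \<Rightarrow> real \<Rightarrow> real" where
  "F s x = (if s \<le> x then s*x - s^2/2 else if x \<le> -s then -s*x - s^2/2 else x^2/2)"

lemma sq_le1: "(0::real) \<le> a - b \<Longrightarrow> a - b \<le> c - d \<Longrightarrow> (a - b)^2 \<le> (c - d)^2"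
  by (simp add: power_mono)

lemma sq_le2: "(a::real) - b \<le> 0 \<Longrightarrow> c - d \<le> a - b \<Longrightarrow> (a - b)^2 \<le> (c - d)^2"
  using sq_le1[of b a d c] by (simp add: power2_commute)

lemma F_approx0:
  assumes s: "0 < s"
  shows "0 \<le> F s z - F s x - sat s x * (z - x) \<and> F s z - F s x - sat s x * (z - x) \<le> (z - x)^2 / 2"
proof -
  have sqs: "0 \<le> (z - s)^2" "0 \<le> (z + s)^2" "0 \<le> (z - x)^2" by simp_all
  consider "s \<le> x" | "x \<le> -s" | "-s < x" "x < s" by linarith
  then show ?thesis
  proof cases
    case 1
    then have sx: "sat s x = s" using s by (simp add: sat_alt)
    consider "s \<le> z" | "z \<le> -s" | "-s < z" "z < s" by linarith
    then show ?thesis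
    proof cases
      case 1 then show ?thesis using sqs \<open>s \<le> x\<close> sx by (simp add: F_def algebra_simps)
    next
      case 2
      have h1: "(z - s)^2 \<le> (z - x)^2" using sq_le2[of z s z x] 2 \<open>s \<le> x\<close> s by simp
      have h2: "0 \<le> (z + s)^2" by simp
      have h3: "0 \<le> s * (-z)" using 2 s by (intro mult_nonneg_nonneg) auto
      show ?thesis using sqs 2 \<open>s \<le> x\<close> s sx h1 h2 h3
        by (simp add: F_def power2_diff power2_sum algebra_simps power2_eq_square)
    next
      case 3
      have h1: "(z - s)^2 \<le> (z - x)^2" using sq_le2[of z s z x] 3 \<open>s \<le> x\<close> by simp
      show ?thesis using sqs 3 \<open>s \<le> x\<close> s sx h1
        by (simp add: F_def power2_diff power2_sum algebra_simps power2_eq_square)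
    qed
  next
    case 2
    then have sx: "sat s x = -s" using s by (simp add: sat_alt)
    consider "z \<le> -s" | "s \<le> z" | "-s < z" "z < s" by linarith
    then show ?thesis
    proof cases
      case 1 then show ?thesis using sqs \<open>x \<le> -s\<close> sx s by (simp add: F_def algebra_simps)
    next
      case 2
      have h1: "(z + s)^2 \<le> (z - x)^2" using sq_le1[of z "-s" z x] 2 \<open>x \<le> -s\<close> s by simp
      have h2: "0 \<le> (z - s)^2" by simp
      have h3: "0 \<le> s * z" using 2 s by (intro mult_nonneg_nonneg) auto
      show ?thesis using sqs 2 \<open>x \<le> -s\<close> s sx h1 h2 h3
        by (simp add: F_def power2_diff power2_sum algebra_simps power2_eq_square)
    next
      case 3
      have h1: "(z + s)^2 \<le> (z - x)^2" using sq_le1[of z "-s" z x] 3 \<open>x \<le> -s\<close> by simp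
      show ?thesis using sqs 3 \<open>x \<le> -s\<close> s sx h1
        by (simp add: F_def power2_diff power2_sum algebra_simps power2_eq_square)
    qed
  next
    case 3
    then have sx: "sat s x = x" using s by (simp add: sat_alt)
    consider "s \<le> z" | "z \<le> -s" | "-s < z" "z < s" by linarith
    then show ?thesis
    proof cases
      case 1
      have h1: "(z - s)^2 \<le> (z - x)^2" using sq_le1[of z s z x] 1 \<open>x < s\<close> by simp
      show ?thesis using sqs 1 3 s sx h1
        by (simp add: F_def power2_diff power2_sum algebra_simps power2_eq_square)
    next
      case 2
      have h1: "(z + s)^2 \<le> (z - x)^2" using sq_le2[of z "-s" z x] 2 \<open>-s < x\<close> by simp
      show ?thesis using sqs 2 3 s sx h1
        by (simp add: F_def power2_diff power2_sum algebra_simps power2_eq_square)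
    next
      case 4: 3
      show ?thesis using sqs 3 4 s sx
        by (simp add: F_def power2_diff power2_sum algebra_simps power2_eq_square)
    qed
  qed
qed

lemma F_approx:
  assumes s: "0 < s"
  shows "\<bar>F s z - F s x - sat s x * (z - x)\<bar> \<le> (z - x)^2 / 2"
  using F_approx0[OF s, of z x] by linarith



lemma deriv_from_bound:
  fixes f :: "real \<Rightarrow> real"
  assumes b: "\<forall>z. \<bar>f z - f x - D * (z - x)\<bar> \<le> K * (z - x)^2"
  shows "(f has_real_derivative D) (at x)"
proof -
  have "((\<lambda>z. (f z - f x) / (z - x) - D) \<longlongrightarrow> 0) (at x)"
  proof (rule Lim_null_comparison)
    show "\<forall>\<^sub>F z in at x. norm ((f z - f x) / (z - x) - D) \<le> K * \<bar>z - x\<bar>"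
      unfolding eventually_at_filter
    proof (intro always_eventually allI impI)
      fix z assume "z \<noteq> x"
      then have "(f z - f x) / (z - x) - D = (f z - f x - D * (z - x)) / (z - x)"
        by (simp add: field_simps)
      then have "norm ((f z - f x) / (z - x) - D) = \<bar>f z - f x - D * (z - x)\<bar> / \<bar>z - x\<bar>"
        by simp
      also have "\<dots> \<le> K * (z - x)^2 / \<bar>z - x\<bar>"
        using b[rule_format, of z] by (simp add: divide_right_mono)
      also have "\<dots> = K * \<bar>z - x\<bar>"
      proof -
        have e: "(z - x)^2 = \<bar>z - x\<bar> * \<bar>z - x\<bar>" by (simp add: power2_eq_square)
        have "\<bar>z - x\<bar> \<noteq> 0" using \<open>z \<noteq> x\<close> by simp
        then show ?thesis unfolding e by (simp add: field_simps)
      qed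
      finally show "norm ((f z - f x) / (z - x) - D) \<le> K * \<bar>z - x\<bar>" .
    qed
    have "((\<lambda>z. K * \<bar>z - x\<bar>) \<longlongrightarrow> K * \<bar>x - x\<bar>) (at x)"
      by (intro tendsto_intros)
    then show "((\<lambda>z. K * \<bar>z - x\<bar>) \<longlongrightarrow> 0) (at x)" by simp
  qed
  then have "((\<lambda>z. (f z - f x) / (z - x)) \<longlongrightarrow> D) (at x)"
    by (simp add: LIM_zero_iff)
  then show ?thesis by (simp add: has_field_derivative_iff)
qed

lemma F_deriv: "0 < s \<Longrightarrow> (F s has_real_derivative sat s x) (at x)"
  by (rule deriv_from_bound[where K="1/2"]) (use F_approx in simp)

lemma F_nonneg: assumes "0 < s" shows "0 \<le> F s x"
proof -
  have a: "s * s \<le> s * x" if "s \<le> x" using that assms by (intro mult_left_mono) auto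
  have b: "s * s \<le> s * (-x)" if "x \<le> -s" using that assms by (intro mult_left_mono) auto
  have sq: "0 \<le> s * s" by simp
  consider "s \<le> x" | "\<not> s \<le> x" "x \<le> -s" | "\<not> s \<le> x" "\<not> x \<le> -s" by blast
  then show ?thesis
  proof cases
    case 1 then have "F s x = s * x - s * s / 2" by (simp add: F_def power2_eq_square)
    then show ?thesis using a 1 sq by linarith
  next
    case 2 then have "F s x = - s * x - s * s / 2" by (simp add: F_def power2_eq_square)
    then show ?thesis using b 2 sq by linarith
  next
    case 3 then have "F s x = x^2 / 2" by (simp add: F_def)
    moreover have "0 \<le> x^2 / 2" by simp
    ultimately show ?thesis by linarith
  qed
qed



lemma col:
  fixes \<alpha> :: "'n::finite \<Rightarrow> 'n \<Rightarrow> real"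
  assumes p_left: "\<forall>j. (\<Sum>i\<in>UNIV. p i * laplacian \<alpha> i j) = 0"
  shows "(\<Sum>i\<in>UNIV. p i * \<alpha> i j) = p j * (\<Sum>k\<in>UNIV. \<alpha> j k)"
proof -
  have "(\<Sum>i\<in>UNIV. p i * laplacian \<alpha> i j)
      = (\<Sum>i\<in>UNIV. p i * (if i = j then (\<Sum>k\<in>UNIV. \<alpha> i k) else 0)) - (\<Sum>i\<in>UNIV. p i * \<alpha> i j)"
    by (simp add: laplacian_def right_diff_distrib sum_subtractf)
  also have "(\<lambda>i. p i * (if i = j then (\<Sum>k\<in>UNIV. \<alpha> i k) else 0))
      = (\<lambda>i. if i = j then p j * (\<Sum>k\<in>UNIV. \<alpha> j k) else 0)" by auto
  finally show ?thesis using p_left by simp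
qed

lemma balance:
  fixes \<alpha> :: "'n::finite \<Rightarrow> 'n \<Rightarrow> real"
  assumes p_left: "\<forall>j. (\<Sum>i\<in>UNIV. p i * laplacian \<alpha> i j) = 0"
  shows "(\<Sum>i\<in>UNIV. p i * (\<Sum>j\<in>UNIV. \<alpha> i j * g j)) = (\<Sum>i\<in>UNIV. p i * (\<Sum>j\<in>UNIV. \<alpha> i j) * g i)"
proof -
  have "(\<Sum>i\<in>UNIV. p i * (\<Sum>j\<in>UNIV. \<alpha> i j * g j)) = (\<Sum>i\<in>UNIV. \<Sum>j\<in>UNIV. p i * \<alpha> i j * g j)"
    by (simp add: sum_distrib_left mult.assoc)
  also have "\<dots> = (\<Sum>j\<in>UNIV. \<Sum>i\<in>UNIV. p i * \<alpha> i j * g j)" by (rule sum.swap)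
  also have "\<dots> = (\<Sum>j\<in>UNIV. (\<Sum>i\<in>UNIV. p i * \<alpha> i j) * g j)" by (simp add: sum_distrib_right)
  also have "\<dots> = (\<Sum>j\<in>UNIV. p j * (\<Sum>k\<in>UNIV. \<alpha> j k) * g j)" using col[OF p_left] by simp
  finally show ?thesis .
qed

lemma p_pos:
  fixes \<alpha> :: "'n::finite \<Rightarrow> 'n \<Rightarrow> real"
  assumes nonneg: "\<forall>i j. \<alpha> i j \<ge> 0" and sc: "strongly_connected \<alpha>"
    and p_left: "\<forall>j. (\<Sum>i\<in>UNIV. p i * laplacian \<alpha> i j) = 0"
    and p_norm: "(\<Sum>i\<in>UNIV. p i) = 1"
  shows "p i > 0"
proof -
  define S where "S = {j. p j \<le> 0}"
  have split: "(\<Sum>i\<in>UNIV. g i) = (\<Sum>i\<in>S. g i) + (\<Sum>i\<in>-S. g i)" for g :: "'n \<Rightarrow> real"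
    using sum.Int_Diff[of UNIV g S] by (simp add: Compl_eq_Diff_UNIV)
  have "(\<Sum>j\<in>S. \<Sum>i\<in>UNIV. p i * \<alpha> i j) = (\<Sum>j\<in>S. \<Sum>k\<in>UNIV. p j * \<alpha> j k)"
    using col[OF p_left] by (simp add: sum_distrib_left)
  then have "(\<Sum>j\<in>S. \<Sum>i\<in>S. p i * \<alpha> i j) + (\<Sum>j\<in>S. \<Sum>i\<in>-S. p i * \<alpha> i j)
      = (\<Sum>j\<in>S. \<Sum>k\<in>S. p j * \<alpha> j k) + (\<Sum>j\<in>S. \<Sum>k\<in>-S. p j * \<alpha> j k)"
    by (simp add: split sum.distrib)
  moreover have "(\<Sum>j\<in>S. \<Sum>i\<in>S. p i * \<alpha> i j) = (\<Sum>j\<in>S. \<Sum>k\<in>S. p j * \<alpha> j k)"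
    by (rule sum.swap)
  ultimately have XY: "(\<Sum>j\<in>S. \<Sum>i\<in>-S. p i * \<alpha> i j) = (\<Sum>j\<in>S. \<Sum>k\<in>-S. p j * \<alpha> j k)"
    by simp
  have X: "(\<Sum>j\<in>S. \<Sum>k\<in>-S. p j * \<alpha> j k) \<le> 0"
    by (intro sum_nonpos) (use nonneg in \<open>auto simp: S_def intro: mult_nonpos_nonneg\<close>)
  have Ynn: "\<forall>j\<in>S. \<forall>i\<in>-S. 0 \<le> p i * \<alpha> i j"
    using nonneg by (auto simp: S_def)
  have Y0: "(\<Sum>j\<in>S. \<Sum>i\<in>-S. p i * \<alpha> i j) = 0"
  proof -
    have "0 \<le> (\<Sum>j\<in>S. \<Sum>i\<in>-S. p i * \<alpha> i j)"
      using Ynn by (intro sum_nonneg) auto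
    then show ?thesis using XY X by linarith
  qed
  have zero: "\<alpha> i j = 0" if "j \<in> S" "i \<in> -S" for i j
  proof -
    have "\<forall>j\<in>S. (\<Sum>i\<in>-S. p i * \<alpha> i j) = 0"
      using Y0 Ynn by (subst sum_nonneg_eq_0_iff[symmetric]) (auto intro: sum_nonneg)
    then have "(\<Sum>i\<in>-S. p i * \<alpha> i j) = 0" using that by blast
    then have "p i * \<alpha> i j = 0"
      using Ynn that sum_nonneg_eq_0_iff[of "-S" "\<lambda>i. p i * \<alpha> i j"] by auto
    then show ?thesis using that by (auto simp: S_def)
  qed
  obtain a where a: "p a > 0"
  proof (rule ccontr)
    assume "\<not> thesis"
    then have "\<forall>a. p a \<le> 0" using that by (meson not_le)
    then have "(\<Sum>i\<in>UNIV. p i) \<le> 0" by (intro sum_nonpos) auto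
    then show False using p_norm by simp
  qed
  have "i \<in> -S"
  proof (rule sc_closed[OF sc, of a])
    show "a \<in> -S" using a by (simp add: S_def)
    show "\<forall>i j. i \<in> -S \<longrightarrow> 0 < \<alpha> i j \<longrightarrow> j \<in> -S"
      using zero by force
  qed
  then show ?thesis by (simp add: S_def)
qed



lemma lyap_identity:
  fixes \<alpha> :: "'n::finite \<Rightarrow> 'n \<Rightarrow> real"
  assumes p_left: "\<forall>j. (\<Sum>i\<in>UNIV. p i * laplacian \<alpha> i j) = 0"
  shows "(\<Sum>i\<in>UNIV. p i * (g i * (\<Sum>j\<in>UNIV. \<alpha> i j * (g j - g i))))
       = -(1/2) * (\<Sum>i\<in>UNIV. \<Sum>j\<in>UNIV. p i * \<alpha> i j * (g i - g j)^2)"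
proof -
  define A1 where "A1 = (\<Sum>i\<in>UNIV. p i * (\<Sum>j\<in>UNIV. \<alpha> i j) * (g i)^2)"
  define A2 where "A2 = (\<Sum>i\<in>UNIV. p i * g i * (\<Sum>j\<in>UNIV. \<alpha> i j * g j))"
  define A3 where "A3 = (\<Sum>i\<in>UNIV. p i * (\<Sum>j\<in>UNIV. \<alpha> i j * (g j)^2))"
  have A31: "A3 = A1" unfolding A3_def A1_def by (rule balance[OF p_left])
  have L: "(\<Sum>i\<in>UNIV. p i * (g i * (\<Sum>j\<in>UNIV. \<alpha> i j * (g j - g i)))) = A2 - A1"
  proof -
    have "p i * (g i * (\<Sum>j\<in>UNIV. \<alpha> i j * (g j - g i)))
        = p i * g i * (\<Sum>j\<in>UNIV. \<alpha> i j * g j) - p i * (\<Sum>j\<in>UNIV. \<alpha> i j) * (g i)^2" for i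
      by (simp add: right_diff_distrib sum_subtractf sum_distrib_right sum_distrib_left
          power2_eq_square algebra_simps)
    then show ?thesis by (simp add: A1_def A2_def sum_subtractf)
  qed
  have R: "(\<Sum>i\<in>UNIV. \<Sum>j\<in>UNIV. p i * \<alpha> i j * (g i - g j)^2) = A1 - 2 * A2 + A3"
  proof -
    have "(\<Sum>j\<in>UNIV. p i * \<alpha> i j * (g i - g j)^2)
        = p i * (\<Sum>j\<in>UNIV. \<alpha> i j) * (g i)^2 - 2 * (p i * g i * (\<Sum>j\<in>UNIV. \<alpha> i j * g j))
          + p i * (\<Sum>j\<in>UNIV. \<alpha> i j * (g j)^2)" for i
    proof -
      have "(\<Sum>j\<in>UNIV. p i * \<alpha> i j * (g i - g j)^2)
          = (\<Sum>j\<in>UNIV. p i * (g i)^2 * \<alpha> i j - 2 * (p i * g i) * (\<alpha> i j * g j) + p i * (\<alpha> i j * (g j)^2))"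
        by (rule sum.cong) (simp_all add: power2_diff algebra_simps)
      also have "\<dots> = p i * (g i)^2 * (\<Sum>j\<in>UNIV. \<alpha> i j) - 2 * (p i * g i) * (\<Sum>j\<in>UNIV. \<alpha> i j * g j)
          + p i * (\<Sum>j\<in>UNIV. \<alpha> i j * (g j)^2)"
        by (simp add: sum.distrib sum_subtractf sum_distrib_left)
      finally show ?thesis by (simp add: algebra_simps)
    qed
    then show ?thesis by (simp add: A1_def A2_def A3_def sum.distrib sum_subtractf sum_distrib_left)
  qed
  show ?thesis using L R A31 by linarith
qed

locale sysp = sys \<alpha> s x t0 for \<alpha> :: "'n::finite \<Rightarrow> 'n \<Rightarrow> real" and s x t0 +
  fixes p :: "'n \<Rightarrow> real"
  assumes sc: "strongly_connected \<alpha>"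
    and p_left: "\<forall>j. (\<Sum>i\<in>UNIV. p i * laplacian \<alpha> i j) = 0"
    and p_norm: "(\<Sum>i\<in>UNIV. p i) = 1"
begin

lemma pp: "p i > 0" by (rule p_pos[OF nonneg sc p_left p_norm])

lemma W_inv:
  assumes "t0 \<le> t"
  shows "(\<Sum>i\<in>UNIV. p i * x t i) = (\<Sum>i\<in>UNIV. p i * x t0 i)"
proof -
  have z: "(\<Sum>i\<in>UNIV. p i * xd t i) = 0" for t
  proof -
    have "xd t i = (\<Sum>j\<in>UNIV. \<alpha> i j * y t j) - (\<Sum>j\<in>UNIV. \<alpha> i j) * y t i" for i
      by (simp add: right_diff_distrib sum_subtractf sum_distrib_right)
    then have "(\<Sum>i\<in>UNIV. p i * xd t i)
        = (\<Sum>i\<in>UNIV. p i * (\<Sum>j\<in>UNIV. \<alpha> i j * y t j)) - (\<Sum>i\<in>UNIV. p i * (\<Sum>j\<in>UNIV. \<alpha> i j) * y t i)"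
      by (simp add: right_diff_distrib sum_subtractf mult.assoc)
    then show ?thesis using balance[OF p_left, of "y t"] by simp
  qed
  have d: "\<forall>t\<ge>t0. ((\<lambda>t. \<Sum>i\<in>UNIV. p i * x t i) has_real_derivative (\<Sum>i\<in>UNIV. p i * xd t i))
           (at t within {t0..})"
    by (intro allI impI DERIV_sum DERIV_cmult) (use der in auto)
  have "(\<Sum>i\<in>UNIV. p i * x t i) - (\<Sum>i\<in>UNIV. p i * x t0 i) \<le> (t - t0) * 0"
    by (rule deriv_le_within[OF d order_refl assms]) (simp add: z)
  moreover have "(t - t0) * 0 \<le> (\<Sum>i\<in>UNIV. p i * x t i) - (\<Sum>i\<in>UNIV. p i * x t0 i)"
    by (rule deriv_ge_within[OF d order_refl assms]) (simp add: z)
  ultimately show ?thesis by simp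
qed

definition V where "V t = (\<Sum>i\<in>UNIV. p i * F (s i) (x t i))"
definition Q where "Q t = (\<Sum>i\<in>UNIV. \<Sum>j\<in>UNIV. p i * \<alpha> i j * (y t i - y t j)^2)"

lemma V_deriv: "\<forall>t\<ge>t0. (V has_real_derivative (-(1/2) * Q t)) (at t within {t0..})"
proof (intro allI impI)
  fix t assume t: "t0 \<le> t"
  have "((\<lambda>t. F (s i) (x t i)) has_real_derivative y t i * xd t i) (at t within {t0..})" for i
    by (rule DERIV_chain2[OF F_deriv der[rule_format, OF t]]) (use s_pos in auto)
  then have "((\<lambda>t. \<Sum>i\<in>UNIV. p i * F (s i) (x t i)) has_real_derivative
       (\<Sum>i\<in>UNIV. p i * (y t i * xd t i))) (at t within {t0..})"
    by (intro DERIV_sum DERIV_cmult) auto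
  moreover have "(\<Sum>i\<in>UNIV. p i * (y t i * xd t i)) = -(1/2) * Q t"
    unfolding Q_def by (rule lyap_identity[OF p_left])
  ultimately show "(V has_real_derivative (-(1/2) * Q t)) (at t within {t0..})"
    by (simp add: V_def[abs_def])
qed

lemma term_nn: "0 \<le> p i * \<alpha> i j * (y t i - y t j)^2"
proof -
  have "0 \<le> p i * \<alpha> i j" using nonneg pp[of i] by (simp add: less_imp_le)
  then show ?thesis by simp
qed

lemma Q_nonneg: "0 \<le> Q t"
  unfolding Q_def by (intro sum_nonneg term_nn)

lemma Q_edge: "p i * \<alpha> i j * (y t i - y t j)^2 \<le> Q t"
proof -
  have "p i * \<alpha> i j * (y t i - y t j)^2 \<le> (\<Sum>j\<in>UNIV. p i * \<alpha> i j * (y t i - y t j)^2)"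
    by (rule member_le_sum) (auto intro: term_nn)
  also have "\<dots> \<le> Q t" unfolding Q_def
    by (rule member_le_sum[of i UNIV "\<lambda>i. \<Sum>j\<in>UNIV. p i * \<alpha> i j * (y t i - y t j)^2"])
       (auto intro: sum_nonneg term_nn)
  finally show ?thesis .
qed

lemma V_nonneg: "0 \<le> V t"
  unfolding V_def by (intro sum_nonneg mult_nonneg_nonneg less_imp_le[OF pp] F_nonneg s_pos[rule_format])

lemma V_mono: "t0 \<le> a \<Longrightarrow> a \<le> b \<Longrightarrow> V b \<le> V a"
  using deriv_le_within[OF V_deriv, of a b 0] Q_nonneg by auto

lemma B_nonneg: "0 \<le> B i"
  using xd_bound[where t=t0 and i=i] by linarith

lemma edge_conv:
  assumes a: "\<alpha> i j > 0"
  shows "((\<lambda>t. y t i - y t j) \<longlongrightarrow> 0) at_top"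
proof -
  define c where "c = p i * \<alpha> i j"
  have c: "0 < c" using a pp[of i] by (simp add: c_def)
  define L where "L = B i + B j + 1"
  have L: "0 < L" using B_nonneg[of i] B_nonneg[of j] by (simp add: L_def)
  have lip: "\<bar>(y b i - y b j) - (y a i - y a j)\<bar> \<le> L * \<bar>b - a\<bar>" if "t0 \<le> a" "t0 \<le> b" for a b
  proof -
    have "\<bar>(y b i - y b j) - (y a i - y a j)\<bar> \<le> B i * \<bar>b - a\<bar> + B j * \<bar>b - a\<bar>"
      using y_lip[OF that, of i] y_lip[OF that, of j] by linarith
    also have "\<dots> \<le> L * \<bar>b - a\<bar>" by (simp add: L_def algebra_simps)
    finally show ?thesis .
  qed
  have "\<forall>\<^sub>F t in at_top. dist (y t i - y t j) 0 < e" if e: "0 < e" for e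
  proof (rule ccontr)
    assume "\<not> (\<forall>\<^sub>F t in at_top. dist (y t i - y t j) 0 < e)"
    then have big: "\<forall>T. \<exists>t\<ge>T. e \<le> \<bar>y t i - y t j\<bar>"
      unfolding eventually_at_top_linorder by (auto simp: not_less)
    define h where "h = e / (2 * L)"
    have h: "0 < h" using e L by (simp add: h_def)
    define \<eta> where "\<eta> = h * (c * e^2 / 8)"
    have \<eta>: "0 < \<eta>" using h c e by (simp add: \<eta>_def)
    define L0 where "L0 = Inf (V ` {t0..})"
    have bdd: "bdd_below (V ` {t0..})" by (rule bdd_belowI[where m=0]) (auto simp: V_nonneg)
    have L0le: "L0 \<le> V t" if "t0 \<le> t" for t
      unfolding L0_def using bdd that by (auto intro: cInf_lower)
    have "\<exists>v\<in>V ` {t0..}. v < L0 + \<eta>"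
      unfolding L0_def using bdd \<eta> by (subst cInf_less_iff[symmetric]) auto
    then obtain T where T: "t0 \<le> T" "V T < L0 + \<eta>" by auto
    obtain t where t: "T \<le> t" "e \<le> \<bar>y t i - y t j\<bar>" using big by blast
    have t0t: "t0 \<le> t" using T t by simp
    have "V (t + h) - V t \<le> ((t + h) - t) * (-(c * e^2 / 8))"
    proof (rule deriv_le_within[OF V_deriv t0t], simp add: h less_imp_le, intro allI impI)
      fix z assume z: "t < z \<and> z < t + h"
      have "\<bar>(y z i - y z j) - (y t i - y t j)\<bar> \<le> L * \<bar>z - t\<bar>"
        using lip[OF t0t, of z] z t0t by simp
      moreover have "L * \<bar>z - t\<bar> \<le> L * h" using z L by (simp add: less_imp_le)
      moreover have "L * h = e / 2" using L by (simp add: h_def)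
      ultimately have "e / 2 \<le> \<bar>y z i - y z j\<bar>" using t(2) by linarith
      then have "(e/2)^2 \<le> \<bar>y z i - y z j\<bar>^2" using e by (intro power_mono) auto
      then have sq: "e^2 / 4 \<le> (y z i - y z j)^2" by (simp add: power_divide)
      have "c * (e^2 / 4) \<le> c * (y z i - y z j)^2" using sq c by (simp add: mult_left_mono)
      also have "\<dots> \<le> Q z" using Q_edge[of i j z] by (simp add: c_def)
      finally show "-(1/2) * Q z \<le> -(c * e^2 / 8)" by simp
    qed
    then have "V t - V (t + h) \<ge> \<eta>" by (simp add: \<eta>_def)
    moreover have "V t \<le> V T" using V_mono[OF T(1) t(1)] .
    moreover have "L0 \<le> V (t + h)" using L0le[of "t + h"] t0t h by simp
    ultimately show False using T(2) by linarith
  qed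
  then show ?thesis by (rule tendstoI)
qed

lemma pair_conv: "((\<lambda>t. y t i - y t j) \<longlongrightarrow> 0) at_top"
proof (cases "i = j")
  case False
  then have "(i, j) \<in> (edges \<alpha>)\<^sup>+" using sc by (auto simp: strongly_connected_def)
  then show ?thesis
  proof (induction rule: trancl_induct)
    case (base k)
    then show ?case using edge_conv by (auto simp: edges_def)
  next
    case (step k l)
    have "((\<lambda>t. (y t i - y t k) + (y t k - y t l)) \<longlongrightarrow> 0 + 0) at_top"
      using step edge_conv by (intro tendsto_add) (auto simp: edges_def)
    then show ?case by simp
  qed
qed simp

lemma Csum: "(\<Sum>j\<in>UNIV. p j * C) = C"
  using p_norm by (simp add: sum_distrib_right[symmetric])

lemma y_conv:
  assumes C: "C = (\<Sum>i\<in>UNIV. p i * x t0 i)" and Cs: "\<forall>i. \<bar>C\<bar> \<le> s i"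
  shows "((\<lambda>t. y t i) \<longlongrightarrow> C) at_top"
proof -
  have up: "\<exists>j. C \<le> y t j" if t: "t0 \<le> t" for t
  proof (rule ccontr)
    assume "\<not> ?thesis"
    then have lt: "y t j < C" for j by (simp add: not_le)
    have "x t j < C" for j
    proof -
      have "y t j < s j" using lt[of j] Cs by (smt (verit))
      then have "x t j \<le> y t j" by (rule sat_le_x[OF s_nn])
      then show ?thesis using lt[of j] by linarith
    qed
    then have "(\<Sum>j\<in>UNIV. p j * x t j) < (\<Sum>j\<in>UNIV. p j * C)"
      using pp by (intro sum_strict_mono) (auto intro: mult_strict_left_mono)
    then show False using W_inv[OF t] C Csum by simp
  qed
  have down: "\<exists>j. y t j \<le> C" if t: "t0 \<le> t" for t
  proof (rule ccontr)
    assume "\<not> ?thesis"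
    then have lt: "C < y t j" for j by (simp add: not_le)
    have "C < x t j" for j
    proof -
      have "- s j < y t j" using lt[of j] Cs by (smt (verit))
      then have "y t j \<le> x t j" by (rule sat_ge_x[OF s_nn])
      then show ?thesis using lt[of j] by linarith
    qed
    then have "(\<Sum>j\<in>UNIV. p j * C) < (\<Sum>j\<in>UNIV. p j * x t j)"
      using pp by (intro sum_strict_mono) (auto intro: mult_strict_left_mono)
    then show False using W_inv[OF t] C Csum by simp
  qed
  have bound: "\<bar>y t i - C\<bar> \<le> (\<Sum>j\<in>UNIV. \<bar>y t i - y t j\<bar>)" if t: "t0 \<le> t" for t
  proof -
    obtain j1 where j1: "C \<le> y t j1" using up[OF t] by blast
    obtain j2 where j2: "y t j2 \<le> C" using down[OF t] by blast
    have "\<bar>y t i - y t j1\<bar> \<le> (\<Sum>j\<in>UNIV. \<bar>y t i - y t j\<bar>)"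
      "\<bar>y t i - y t j2\<bar> \<le> (\<Sum>j\<in>UNIV. \<bar>y t i - y t j\<bar>)"
      by (auto intro: member_le_sum)
    then show ?thesis using j1 j2 by linarith
  qed
  have "((\<lambda>t. y t i - C) \<longlongrightarrow> 0) at_top"
  proof (rule Lim_null_comparison)
    show "\<forall>\<^sub>F t in at_top. norm (y t i - C) \<le> (\<Sum>j\<in>UNIV. \<bar>y t i - y t j\<bar>)"
      using bound unfolding eventually_at_top_linorder by auto
    have "((\<lambda>t. \<Sum>j\<in>UNIV. \<bar>y t i - y t j\<bar>) \<longlongrightarrow> (\<Sum>j\<in>(UNIV::'n set). \<bar>0::real\<bar>)) at_top"
      by (intro tendsto_sum tendsto_rabs pair_conv)
    then show "((\<lambda>t. \<Sum>j\<in>UNIV. \<bar>y t i - y t j\<bar>) \<longlongrightarrow> 0) at_top" by simp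
  qed
  then show ?thesis by (simp add: LIM_zero_iff)
qed

lemma x_conv_pos:
  assumes C: "C = (\<Sum>i\<in>UNIV. p i * x t0 i)" and Cs: "\<forall>i. \<bar>C\<bar> \<le> s i"
    and Cl: "\<forall>i. - s i < C"
  shows "((\<lambda>t. x t i) \<longlongrightarrow> C) at_top"
proof -
  define m where "m t = (\<Sum>j\<in>UNIV. \<bar>y t j - C\<bar>)" for t
  have mlim: "(m \<longlongrightarrow> 0) at_top"
  proof -
    have "(m \<longlongrightarrow> (\<Sum>j\<in>(UNIV::'n set). \<bar>C - C\<bar>)) at_top"
      unfolding m_def[abs_def] using y_conv[OF C Cs] by (intro tendsto_sum tendsto_rabs tendsto_diff) auto
    then show ?thesis by simp
  qed
  have "\<forall>\<^sub>F t in at_top. \<forall>j. - s j < y t j"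
  proof (intro eventually_all_finite allI)
    fix j show "\<forall>\<^sub>F t in at_top. - s j < y t j"
      using order_tendstoD(1)[OF y_conv[OF C Cs, of j], of "- s j"] Cl by simp
  qed
  moreover have "\<forall>\<^sub>F t in at_top. t0 \<le> t" by (rule eventually_ge_at_top)
  ultimately have ev: "\<forall>\<^sub>F t in at_top. norm (x t i - C) \<le> m t + m t / p i"
  proof (rule eventually_elim2)
    fix t assume Y: "\<forall>j. - s j < y t j" and t: "t0 \<le> t"
    have ym: "\<bar>y t j - C\<bar> \<le> m t" for j unfolding m_def by (auto intro: member_le_sum)
    have xl: "C - m t \<le> x t j" for j
      using sat_ge_x[OF s_nn Y[rule_format, of j]] ym[of j] by linarith
    have "(\<Sum>j\<in>UNIV. p j * (x t j - (C - m t))) = (\<Sum>j\<in>UNIV. p j * x t j) - (\<Sum>j\<in>UNIV. p j * (C - m t))"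
      by (simp add: right_diff_distrib sum_subtractf)
    also have "\<dots> = m t" using W_inv[OF t] C Csum[of "C - m t"] by simp
    finally have s: "(\<Sum>j\<in>UNIV. p j * (x t j - (C - m t))) = m t" .
    have "p i * (x t i - (C - m t)) \<le> (\<Sum>j\<in>UNIV. p j * (x t j - (C - m t)))"
    proof (rule member_le_sum)
      fix j
      have "0 \<le> x t j - (C - m t)" using xl[of j] by simp
      then show "0 \<le> p j * (x t j - (C - m t))" using pp[of j] by simp
    qed auto
    then have "p i * (x t i - (C - m t)) \<le> m t" using s by simp
    then have "x t i - (C - m t) \<le> m t / p i" using pp[of i] by (simp add: field_simps)
    moreover have "0 \<le> m t" unfolding m_def by (auto intro: sum_nonneg)
    moreover have "0 \<le> m t / p i" using pp[of i] \<open>0 \<le> m t\<close> by simp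
    ultimately show "norm (x t i - C) \<le> m t + m t / p i" using xl[of i] by simp
  qed
  have "((\<lambda>t. x t i - C) \<longlongrightarrow> 0) at_top"
  proof (rule Lim_null_comparison[OF ev])
    have "((\<lambda>t. m t + m t / p i) \<longlongrightarrow> 0 + 0 / p i) at_top"
      by (intro tendsto_intros mlim) (use pp[of i] in simp)
    then show "((\<lambda>t. m t + m t / p i) \<longlongrightarrow> 0) at_top" by simp
  qed
  then show ?thesis by (simp add: LIM_zero_iff)
qed

lemma neg: "sysp \<alpha> s (\<lambda>t i. - x t i) t0 p"
  using sys.neg[OF sys_axioms] sc p_left p_norm by (simp add: sysp_def sysp_axioms_def)

end


theorem theorem5:
  fixes \<alpha> :: "'n::finite \<Rightarrow> 'n \<Rightarrow> real"
    and s :: "'n \<Rightarrow> real"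
    and p :: "'n \<Rightarrow> real"
    and x :: "real \<Rightarrow> 'n \<Rightarrow> real"
    and t0 :: real
  assumes nonneg: "\<forall>i j. \<alpha> i j \<ge> 0"
    and sc: "strongly_connected \<alpha>"
    and s_pos: "\<forall>i. s i > 0"
    and p_left: "\<forall>j. (\<Sum>i\<in>UNIV. p i * laplacian \<alpha> i j) = 0"
    and p_norm: "(\<Sum>i\<in>UNIV. p i) = 1"
    and ode: "\<forall>t\<ge>t0. \<forall>i. ((\<lambda>\<tau>. x \<tau> i) has_real_derivative
                 (\<Sum>j\<in>UNIV. \<alpha> i j * (sat (s j) (x t j) - sat (s i) (x t i)))) (at t within {t0..})"
    and not_eq: "\<exists>i j. x t0 i \<noteq> x t0 j"
  shows "consensus x \<longleftrightarrow> \<bar>\<Sum>i\<in>UNIV. p i * x t0 i\<bar> \<le> Min (range s)"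
proof -
  interpret P: sysp \<alpha> s x t0 p
    by (unfold_locales) (use nonneg sc s_pos p_left p_norm ode in auto)
  interpret N: sysp \<alpha> s "\<lambda>t i. - x t i" t0 p by (rule P.neg)
  define C where "C = (\<Sum>i\<in>UNIV. p i * x t0 i)"
  have CN: "(\<Sum>i\<in>UNIV. p i * - x t0 i) = - C" by (simp add: C_def sum_negf)
  have minle: "Min (range s) \<le> s i" for i by simp
  have minpos: "0 < Min (range s)" using s_pos by simp
  show ?thesis
  proof
    assume "consensus x"
    then obtain C' where lim: "\<forall>i. ((\<lambda>t. x t i) \<longlongrightarrow> C') at_top" by (auto simp: consensus_def)
    have "((\<lambda>t. \<Sum>i\<in>UNIV. p i * x t i) \<longlongrightarrow> (\<Sum>i\<in>UNIV. p i * C')) at_top"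
      using lim by (intro tendsto_sum tendsto_mult_left) auto
    then have l1: "((\<lambda>t. \<Sum>i\<in>UNIV. p i * x t i) \<longlongrightarrow> C') at_top" using P.Csum by simp
    have ev: "\<forall>\<^sub>F t in at_top. C = (\<Sum>i\<in>UNIV. p i * x t i)"
      using P.W_inv unfolding C_def eventually_at_top_linorder by (metis)
    have "((\<lambda>t::real. C) \<longlongrightarrow> C') at_top" by (rule iffD2[OF tendsto_cong[OF ev] l1])
    then have CC: "C = C'" by (simp add: tendsto_const_iff)
    have a: "C \<le> Min (range s)" using P.onlyif_pos[OF sc lim not_eq] CC by simp
    have "\<forall>i. ((\<lambda>t. - x t i) \<longlongrightarrow> - C') at_top" using lim by (auto intro: tendsto_minus)
    moreover have "\<exists>i j. - x t0 i \<noteq> - x t0 j" using not_eq by simp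
    ultimately have b: "- C \<le> Min (range s)" using N.onlyif_pos[OF sc] CC by simp
    have "\<bar>C\<bar> \<le> Min (range s)" using a b by (simp only: abs_le_iff)
    then show "\<bar>\<Sum>i\<in>UNIV. p i * x t0 i\<bar> \<le> Min (range s)" by (simp only: C_def)
  next
    assume "\<bar>\<Sum>i\<in>UNIV. p i * x t0 i\<bar> \<le> Min (range s)"
    then have Cm: "\<bar>C\<bar> \<le> Min (range s)" by (simp add: C_def)
    then have Cs: "\<forall>i. \<bar>C\<bar> \<le> s i" using minle order_trans by blast
    have "\<forall>i. ((\<lambda>t. x t i) \<longlongrightarrow> C) at_top"
    proof (cases "- Min (range s) < C")
      case True
      then have "\<forall>i. - s i < C" using minle by (smt (verit))
      then show ?thesis using P.x_conv_pos[OF C_def Cs] by blast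
    next
      case False
      then have "\<forall>i. - s i < - C" using minle minpos Cm by (smt (verit))
      moreover have "\<forall>i. \<bar>- C\<bar> \<le> s i" using Cs by simp
      ultimately have nl: "((\<lambda>t. - x t i) \<longlongrightarrow> - C) at_top" for i
        using N.x_conv_pos[OF CN[symmetric]] by blast
      have "((\<lambda>t. x t i) \<longlongrightarrow> C) at_top" for i
        using tendsto_minus[OF nl[of i]] by simp
      then show ?thesis by blast
    qed
    then show "consensus x" by (auto simp: consensus_def)
  qed
qed


end
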